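(* Let $L$ be a sharp C-lattice and let $m\in L$ be a maximal element. Then there is no $x\in L$ with $m^2<x<m$.
   Context: A multiplicative lattice is a complete lattice $(L,\le)$ with bottom $0$ and top $1$ which is also a commutative monoid with identity $1$ such that $a(\bigvee_\alpha b_\alpha)=\bigvee_\alpha(ab_\alpha)$ for all $a,b_\alpha\in L$. An element $c$ is compact if $c\le\bigvee S$ implies $c\le\bigvee T$ for some finite $T\subseteq S$. A C-lattice is a multiplicative lattice in which $1$ is compact, the product of two compact elements is compact, and every element is a join of compact elements. A maximal element is a maximal element of $L\setminus\{1\}$. $L$ is sharp if whenever $a_1a_2\le b$ with $a_1,a_2,b\in L$, there exist $b_1,b_2\in L$ with $a_i\le b_i$ ($i=1,2$) and $b=b_1b_2$. *)

theory Defs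
  imports Main
begin

definition multiplicative_lattice :: "'a::{complete_lattice, comm_monoid_mult} itself \<Rightarrow> bool" where
  "multiplicative_lattice _ \<longleftrightarrow>
     (1::'a) = top \<and> (\<forall>(a::'a) B. a * Sup B = Sup ((\<lambda>b. a * b) ` B))"

definition compact_el :: "'a::complete_lattice \<Rightarrow> bool" where
  "compact_el c \<longleftrightarrow> (\<forall>S. c \<le> Sup S \<longrightarrow> (\<exists>T. T \<subseteq> S \<and> finite T \<and> c \<le> Sup T))"

definition C_lattice :: "'a::{complete_lattice, comm_monoid_mult} itself \<Rightarrow> bool" where
  "C_lattice t \<longleftrightarrow> multiplicative_lattice t \<and>
     compact_el (1::'a) \<and>
     (\<forall>a b::'a. compact_el a \<longrightarrow> compact_el b \<longrightarrow> compact_el (a * b)) \<and>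
     (\<forall>x::'a. x = Sup {c. compact_el c \<and> c \<le> x})"

definition maximal_el :: "'a::complete_lattice \<Rightarrow> bool" where
  "maximal_el m \<longleftrightarrow> m \<noteq> top \<and> (\<forall>x. m \<le> x \<longrightarrow> x = m \<or> x = top)"

definition sharp :: "'a::{complete_lattice, comm_monoid_mult} itself \<Rightarrow> bool" where
  "sharp _ \<longleftrightarrow> (\<forall>a1 a2 b::'a. a1 * a2 \<le> b \<longrightarrow>
      (\<exists>b1 b2. a1 \<le> b1 \<and> a2 \<le> b2 \<and> b = b1 * b2))"

end

theory Submission
  imports Defs
begin

theorem proposition2p2:
  fixes m :: "'a::{complete_lattice, comm_monoid_mult}"
  assumes "C_lattice TYPE('a)"
    and "sharp TYPE('a)"
    and "maximal_el m"
  shows "\<not> (\<exists>x. m * m < x \<and> x < m)"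
proof
  assume "\<exists>x. m * m < x \<and> x < m"
  then obtain x where x1: "m * m < x" and x2: "x < m" by blast
  have one: "(1::'a) = top" using assms(1) unfolding C_lattice_def multiplicative_lattice_def by blast
  obtain b1 b2 where b: "m \<le> b1" "m \<le> b2" "x = b1 * b2"
    using assms(2) x1 unfolding sharp_def by (meson less_imp_le)
  have m: "\<And>y. m \<le> y \<Longrightarrow> y = m \<or> y = 1" using assms(3) one unfolding maximal_el_def by auto
  from m[OF b(1)] m[OF b(2)] b(3) x1 x2 one show False by (metis less_le_not_le mult_1 mult_1_right top_greatest)
qed

end
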